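(* Let $n\ge1$, $N=\{1,\dots,n\}$, $A=[0,1]$, and let $f$ be an OWA mechanism. If $f$ satisfies proportionality (P) (equivalently, PF, or UFS) then $f$ satisfies individual fair share (IFS); and if $f$ satisfies IFS then $f$ satisfies unanimity (UN).
   Context: A mechanism is a map $f:A^n\to A$ from profiles $x=(x_i)_{i\in N}$ of reported locations to a facility location. An OWA mechanism has weights $w_1,\dots,w_n\in[0,1]$ with $\sum_j w_j=1$ and returns $f(x)=\sum_{j=1}^n w_j x_{\pi(j)}$, where $\pi$ is a permutation of $N$ with $x_{\pi(1)}\le\dots\le x_{\pi(n)}$. P: for every $x\in\{0,1\}^n$, $f(x)=\#\{i: x_i=1\}/n$. PF: for every $x$, nonempty $S\subseteq N$, $i\in S$: $|x_i-f(x)|\le 1-\frac{|S|}{n}+\max_{j\in S}x_j-\min_{j\in S}x_j$. UFS: for every $x$, every nonempty $S\subseteq N$ whose members all report the same location, and $i\in S$: $|x_i-f(x)|\le 1-\frac{|S|}{n}$. IFS: for every $x$ and $i\in N$, $|x_i-f(x)|\le1-\frac1n$. UN: whenever $x_i=c$ for all $i\in N$, $f(x)=c$. *)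

theory Defs
  imports Complex_Main
begin

text \<open>Agents are indexed 0..<n (i.e. N = {1..n} shifted); a profile is a function
  x :: nat \<Rightarrow> real whose values on {0..<n} lie in A = [0,1].\<close>

definition profile :: "nat \<Rightarrow> (nat \<Rightarrow> real) \<Rightarrow> bool" where
  "profile n x \<longleftrightarrow> (\<forall>i<n. x i \<in> {0..1})"

text \<open>OWA mechanism: weighted sum of the sorted reports x_{pi(1)} <= ... <= x_{pi(n)}
  (index j here corresponds to j+1 in the paper).\<close>

definition owa_weights :: "nat \<Rightarrow> (nat \<Rightarrow> real) \<Rightarrow> bool" where
  "owa_weights n w \<longleftrightarrow> (\<forall>j<n. w j \<in> {0..1}) \<and> (\<Sum>j<n. w j) = 1"

definition owa :: "nat \<Rightarrow> (nat \<Rightarrow> real) \<Rightarrow> (nat \<Rightarrow> real) \<Rightarrow> real" where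
  "owa n w x = (\<Sum>j<n. w j * (sort (map x [0..<n]) ! j))"

definition prop_P :: "nat \<Rightarrow> ((nat \<Rightarrow> real) \<Rightarrow> real) \<Rightarrow> bool" where
  "prop_P n f \<longleftrightarrow> (\<forall>x. (\<forall>i<n. x i \<in> {0,1}) \<longrightarrow>
      f x = real (card {i. i < n \<and> x i = 1}) / real n)"

definition prop_PF :: "nat \<Rightarrow> ((nat \<Rightarrow> real) \<Rightarrow> real) \<Rightarrow> bool" where
  "prop_PF n f \<longleftrightarrow> (\<forall>x S i. profile n x \<longrightarrow> S \<subseteq> {..<n} \<longrightarrow> S \<noteq> {} \<longrightarrow> i \<in> S \<longrightarrow>
      \<bar>x i - f x\<bar> \<le> 1 - real (card S) / real n + (Max (x ` S) - Min (x ` S)))"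

definition prop_UFS :: "nat \<Rightarrow> ((nat \<Rightarrow> real) \<Rightarrow> real) \<Rightarrow> bool" where
  "prop_UFS n f \<longleftrightarrow> (\<forall>x S i. profile n x \<longrightarrow> S \<subseteq> {..<n} \<longrightarrow> S \<noteq> {} \<longrightarrow>
      (\<forall>j\<in>S. \<forall>k\<in>S. x j = x k) \<longrightarrow> i \<in> S \<longrightarrow>
      \<bar>x i - f x\<bar> \<le> 1 - real (card S) / real n)"

definition prop_IFS :: "nat \<Rightarrow> ((nat \<Rightarrow> real) \<Rightarrow> real) \<Rightarrow> bool" where
  "prop_IFS n f \<longleftrightarrow> (\<forall>x i. profile n x \<longrightarrow> i < n \<longrightarrow> \<bar>x i - f x\<bar> \<le> 1 - 1 / real n)"

definition prop_UN :: "nat \<Rightarrow> ((nat \<Rightarrow> real) \<Rightarrow> real) \<Rightarrow> bool" where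
  "prop_UN n f \<longleftrightarrow> (\<forall>x c. profile n x \<longrightarrow> (\<forall>i<n. x i = c) \<longrightarrow> f x = c)"

end

theory Submission
  imports Defs
begin

lemma owa_sorted_info:
  assumes "profile n x"
  shows "length (sort (map x [0..<n])) = n"
    and "sorted (sort (map x [0..<n]))"
    and "\<And>j. j < n \<Longrightarrow> sort (map x [0..<n]) ! j \<in> {0..1}"
    and "\<And>i. i < n \<Longrightarrow> \<exists>m<n. sort (map x [0..<n]) ! m = x i"
proof -
  let ?s = "sort (map x [0..<n])"
  show l: "length ?s = n" by simp
  show "sorted ?s" by simp
  have st: "set ?s = x ` {0..<n}" by simp
  show "\<And>j. j < n \<Longrightarrow> ?s ! j \<in> {0..1}"
  proof -
    fix j assume "j < n"
    then have "?s ! j \<in> set ?s" using l by (metis nth_mem)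
    then obtain k where "k < n" "?s ! j = x k" using st by auto
    then show "?s ! j \<in> {0..1}" using assms unfolding profile_def by auto
  qed
  show "\<And>i. i < n \<Longrightarrow> \<exists>m<n. ?s ! m = x i"
  proof -
    fix i assume "i < n"
    then have "x i \<in> set ?s" using st by auto
    then show "\<exists>m<n. ?s ! m = x i" using l by (metis in_set_conv_nth)
  qed
qed

lemma owa_bounds:
  assumes n: "n \<ge> 1" and w: "owa_weights n w" and p: "profile n x" and i: "i < n"
  shows "x i - owa n w x \<le> 1 - w (n-1)" and "owa n w x - x i \<le> 1 - w 0"
proof -
  let ?s = "sort (map x [0..<n])"
  have so: "sorted ?s" and l: "length ?s = n" using owa_sorted_info[OF p] by auto
  have rng: "\<And>j. j < n \<Longrightarrow> ?s ! j \<in> {0..1}" using owa_sorted_info[OF p] by auto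
  obtain m where m: "m < n" "?s ! m = x i" using owa_sorted_info(4)[OF p i] by auto
  have lo: "?s ! 0 \<le> x i" using m so l by (metis le0 sorted_nth_mono)
  have hi: "x i \<le> ?s ! (n-1)" using m so l n
    by (metis sorted_nth_mono diff_less zero_less_one less_le_trans le_less_trans Suc_pred' less_Suc_eq_le)
  have ws: "(\<Sum>j<n. w j) = 1" and wr: "\<And>j. j < n \<Longrightarrow> 0 \<le> w j" using w unfolding owa_weights_def by auto
  have d0: "(\<Sum>j<n. (if j = 0 then w j else 0)) = w 0" using n by (simp add: sum.delta)
  have d1: "(\<Sum>j<n. (if j = n-1 then w j else 0)) = w (n-1)" using n by (simp add: sum.delta)
  have "owa n w x - ?s ! 0 = (\<Sum>j<n. w j * (?s ! j - ?s ! 0))"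
    unfolding owa_def using ws by (simp add: algebra_simps sum_subtractf sum_distrib_right[symmetric])
  also have "\<dots> \<le> (\<Sum>j<n. w j - (if j = 0 then w j else 0))"
  proof (rule sum_mono)
    fix j assume "j \<in> {..<n}"
    then have "j < n" by auto
    then have "?s ! j - ?s ! 0 \<le> 1" using rng[of j] rng[of 0] n by auto
    then show "w j * (?s ! j - ?s ! 0) \<le> w j - (if j = 0 then w j else 0)"
      using wr[OF \<open>j<n\<close>] by (auto simp: mult_left_le)
  qed
  also have "\<dots> = 1 - w 0" using ws d0 by (simp add: sum_subtractf)
  finally show "owa n w x - x i \<le> 1 - w 0" using lo by linarith
  have "?s ! (n-1) - owa n w x = (\<Sum>j<n. w j * (?s ! (n-1) - ?s ! j))"
    unfolding owa_def using ws by (simp add: algebra_simps sum_subtractf sum_distrib_right[symmetric])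
  also have "\<dots> \<le> (\<Sum>j<n. w j - (if j = n-1 then w j else 0))"
  proof (rule sum_mono)
    fix j assume "j \<in> {..<n}"
    then have "j < n" by auto
    then have "?s ! (n-1) - ?s ! j \<le> 1" using rng[of j] rng[of "n-1"] n by auto
    then show "w j * (?s ! (n-1) - ?s ! j) \<le> w j - (if j = n-1 then w j else 0)"
      using wr[OF \<open>j<n\<close>] by (auto simp: mult_left_le)
  qed
  also have "\<dots> = 1 - w (n-1)" using ws d1 by (simp add: sum_subtractf)
  finally show "x i - owa n w x \<le> 1 - w (n-1)" using hi by linarith
qed


lemma owa_of_sorted:
  assumes "sorted (map x [0..<n])"
  shows "owa n w x = (\<Sum>j<n. w j * x j)"
  unfolding owa_def using assms by (simp add: sorted_sort_id)

lemma P_weights: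
  assumes n: "n \<ge> 1" and w: "owa_weights n w" and P: "prop_P n (owa n w)"
  shows "w (n-1) = 1 / real n" and "w 0 = 1 / real n"
proof -
  have ws: "(\<Sum>j<n. w j) = 1" using w unfolding owa_weights_def by auto
  define x1 :: "nat \<Rightarrow> real" where "x1 = (\<lambda>i. if i = n-1 then 1 else 0)"
  have s1: "sorted (map x1 [0..<n])"
    unfolding sorted_iff_nth_mono_less x1_def by auto
  have "owa n w x1 = (\<Sum>j<n. if j = n-1 then w j else 0)"
    unfolding owa_of_sorted[OF s1] by (rule sum.cong) (auto simp: x1_def)
  also have "\<dots> = w (n-1)" using n by (simp add: sum.delta)
  finally have o1: "owa n w x1 = w (n-1)" .
  have "{i. i < n \<and> x1 i = 1} = {n-1}" unfolding x1_def using n by auto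
  then have c1: "card {i. i < n \<and> x1 i = 1} = 1" by simp
  have "\<forall>i<n. x1 i \<in> {0,1}" unfolding x1_def by auto
  then have "owa n w x1 = real (card {i. i < n \<and> x1 i = 1}) / real n"
    using P unfolding prop_P_def by blast
  then have "owa n w x1 = 1 / real n" using c1 by simp
  then show "w (n-1) = 1 / real n" using o1 by simp
  define x0 :: "nat \<Rightarrow> real" where "x0 = (\<lambda>i. if i = 0 then 0 else 1)"
  have s0: "sorted (map x0 [0..<n])"
    unfolding sorted_iff_nth_mono_less x0_def by auto
  have "owa n w x0 = (\<Sum>j<n. w j - (if j = 0 then w j else 0))"
    unfolding owa_of_sorted[OF s0] by (rule sum.cong) (auto simp: x0_def)
  also have "\<dots> = 1 - w 0" using n ws by (simp add: sum_subtractf sum.delta)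
  finally have o0: "owa n w x0 = 1 - w 0" .
  have "{i. i < n \<and> x0 i = 1} = {1..<n}" unfolding x0_def by auto
  then have "card {i. i < n \<and> x0 i = 1} = n - 1" by simp
  moreover have "\<forall>i<n. x0 i \<in> {0,1}" unfolding x0_def by auto
  moreover have "owa n w x0 = real (card {i. i < n \<and> x0 i = 1}) / real n"
    using P calculation(2) unfolding prop_P_def by blast
  ultimately have "owa n w x0 = real (n-1) / real n" by simp
  then have "1 - w 0 = (real n - 1) / real n" using o0 n by (simp add: of_nat_diff)
  then show "w 0 = 1 / real n" using n by (simp add: field_simps)
qed


lemma PF_UFS:
  assumes "prop_PF n f" shows "prop_UFS n f"
  unfolding prop_UFS_def
proof (intro allI impI)
  fix x S i
  assume a: "profile n x" "S \<subseteq> {..<n}" "S \<noteq> {}" "\<forall>j\<in>S. \<forall>k\<in>S. x j = x k" "i \<in> S"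
  have e: "\<And>j. j \<in> S \<Longrightarrow> x j = x i" using a(4,5) by blast
  have "x ` S = {x i}"
  proof
    show "x ` S \<subseteq> {x i}" using e by blast
    show "{x i} \<subseteq> x ` S" using a(5) by blast
  qed
  then have "Max (x ` S) - Min (x ` S) = 0" by simp
  moreover have "\<bar>x i - f x\<bar> \<le> 1 - real (card S) / real n + (Max (x ` S) - Min (x ` S))"
    using assms unfolding prop_PF_def using a(1,2,3,5) by (elim allE impE) assumption+
  ultimately show "\<bar>x i - f x\<bar> \<le> 1 - real (card S) / real n" by simp
qed

lemma UFS_IFS:
  assumes "prop_UFS n f" shows "prop_IFS n f"
  unfolding prop_IFS_def
proof (intro allI impI)
  fix x i assume a: "profile n x" "i < n"
  have "\<bar>x i - f x\<bar> \<le> 1 - real (card {i}) / real n"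
    using assms unfolding prop_UFS_def using a by (elim allE[of _ x] allE[of _ "{i}"] allE[of _ i] impE) auto
  then show "\<bar>x i - f x\<bar> \<le> 1 - 1 / real n" by simp
qed

lemma P_IFS:
  assumes n: "n \<ge> 1" and w: "owa_weights n w" and P: "prop_P n (owa n w)"
  shows "prop_IFS n (owa n w)"
  unfolding prop_IFS_def
proof (intro allI impI)
  fix x i assume a: "profile n x" "i < n"
  have b1: "x i - owa n w x \<le> 1 - 1 / real n"
    using owa_bounds(1)[OF n w a] P_weights(1)[OF n w P] by simp
  have b2: "owa n w x - x i \<le> 1 - 1 / real n"
    using owa_bounds(2)[OF n w a] P_weights(2)[OF n w P] by simp
  show "\<bar>x i - owa n w x\<bar> \<le> 1 - 1 / real n" using b1 b2 by linarith
qed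

lemma OWA_UN:
  assumes w: "owa_weights n w" shows "prop_UN n (owa n w)"
  unfolding prop_UN_def
proof (intro allI impI)
  fix x :: "nat \<Rightarrow> real" and c assume "profile n x" and c: "\<forall>i<n. x i = c"
  have "map x [0..<n] = map (\<lambda>_. c) [0..<n]" using c by auto
  then have s: "sorted (map x [0..<n])" by (simp add: sorted_iff_nth_mono_less)
  have ws: "(\<Sum>j<n. w j) = 1" using w unfolding owa_weights_def by auto
  have "owa n w x = (\<Sum>j<n. w j * c)" unfolding owa_of_sorted[OF s] using c by simp
  also have "\<dots> = c" using ws by (simp add: sum_distrib_right[symmetric])
  finally show "owa n w x = c" .
qed

theorem mainTheorem7:
  fixes n :: nat and w :: "nat \<Rightarrow> real"
  assumes "n \<ge> 1" and "owa_weights n w"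
  shows "((prop_P n (owa n w) \<or> prop_PF n (owa n w) \<or> prop_UFS n (owa n w))
            \<longrightarrow> prop_IFS n (owa n w))
         \<and> (prop_IFS n (owa n w) \<longrightarrow> prop_UN n (owa n w))"
  using P_IFS[OF assms] PF_UFS UFS_IFS OWA_UN[OF assms(2)] by blast

end
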